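(* Under the standing assumptions below, fix $\delta_1,\delta_2,\delta_3>0$. There is a constant $C$ such that for all $n\ge2$, almost surely on the event $A_n\setminus B_n$, $$\mathbb P\big[X_{2n}=0\,\big|\,\mathcal F\vee\mathcal G\big]\le C\sqrt{\frac{\ln n}{n}}.$$
   Context: Standing assumptions: $(\epsilon_y)_{y\in\mathbb Z}$ is a stationary sequence of $\{-1,+1\}$-valued associated random variables with $\mathbb P[\epsilon_0=\pm1]=\tfrac12$ and $\mathbb E[\epsilon_0\epsilon_y]=O(|y|^{-\alpha})$ for some $\alpha>1$. $Y$ is a simple symmetric random walk on $\mathbb Z$ with $Y_0=0$, independent of $\epsilon$. $(\xi_i^{(y)})_{i\ge1,y\in\mathbb Z}$ are i.i.d., independent of $(\epsilon,Y)$, with $\mathbb P[\xi_i^{(y)}=k]=\tfrac23(\tfrac13)^k$, $k\ge0$. $\mathcal F=\sigma(Y_k,k\ge0)$, $\mathcal G=\sigma(\epsilon_y,y\in\mathbb Z)$. Local time: $\eta_n(y)=\sum_{k=0}^n\mathbf 1_{\{Y_k=y\}}$, $\eta_{-1}\equiv0$. $X_0=0$, $X_n=\sum_{y}\epsilon_y\sum_{i=1}^{\eta_{n-1}(y)}\xi_i^{(y)}$ for $n\ge1$. $A_n=\{\max_{0\le k\le2n}|Y_k|<n^{1/2+\delta_1}\}\cap\{\max_{y}\eta_{2n-1}(y)<n^{1/2+\delta_2}\}$ and $B_n=A_n\cap\{|\sum_{y}\epsilon_y\eta_{2n-1}(y)|>n^{1/2+\delta_3}\}$. *)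

theory Defs
  imports "HOL-Probability.Probability"
begin

definition local_time :: "(nat \<Rightarrow> 'a \<Rightarrow> int) \<Rightarrow> nat \<Rightarrow> int \<Rightarrow> 'a \<Rightarrow> nat" where
  "local_time Y n y \<omega> = card {k. k \<le> n \<and> Y k \<omega> = y}"

(* X_0 = 0,  X_m = sum_y eps_y sum_{i=1}^{eta_{m-1}(y)} xi_i^(y);  the sum over y is
   written over the (finite) set of visited sites, outside of which eta_{m-1}(y) = 0 *)
definition rwrs_X :: "(int \<Rightarrow> 'a \<Rightarrow> int) \<Rightarrow> (nat \<Rightarrow> 'a \<Rightarrow> int) \<Rightarrow> (nat \<Rightarrow> int \<Rightarrow> 'a \<Rightarrow> nat)
                      \<Rightarrow> nat \<Rightarrow> 'a \<Rightarrow> int" where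
  "rwrs_X eps Y xi m \<omega> =
     (if m = 0 then 0
      else (\<Sum>y\<in>(\<lambda>k. Y k \<omega>) ` {..m - 1}.
              eps y \<omega> * (\<Sum>i=1..local_time Y (m - 1) y \<omega>. int (xi i y \<omega>))))"

definition event_A :: "(nat \<Rightarrow> 'a \<Rightarrow> int) \<Rightarrow> real \<Rightarrow> real \<Rightarrow> nat \<Rightarrow> 'a set" where
  "event_A Y d1 d2 n =
     {\<omega>. (\<forall>k\<le>2*n. real_of_int \<bar>Y k \<omega>\<bar> < real n powr (1/2 + d1)) \<and>
          (\<forall>y. real (local_time Y (2*n - 1) y \<omega>) < real n powr (1/2 + d2))}"

definition event_B :: "(int \<Rightarrow> 'a \<Rightarrow> int) \<Rightarrow> (nat \<Rightarrow> 'a \<Rightarrow> int) \<Rightarrow> real \<Rightarrow> real \<Rightarrow> real \<Rightarrow> nat \<Rightarrow> 'a set" where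
  "event_B eps Y d1 d2 d3 n =
     event_A Y d1 d2 n \<inter>
     {\<omega>. real_of_int \<bar>\<Sum>y\<in>(\<lambda>k. Y k \<omega>) ` {..2*n - 1}. eps y \<omega> * int (local_time Y (2*n - 1) y \<omega>)\<bar>
            > real n powr (1/2 + d3)}"

definition gen_FG :: "'a measure \<Rightarrow> (int \<Rightarrow> 'a \<Rightarrow> int) \<Rightarrow> (nat \<Rightarrow> 'a \<Rightarrow> int) \<Rightarrow> 'a measure" where
  "gen_FG M eps Y = sigma (space M)
     ({Y k -` A \<inter> space M | k A. True} \<union> {eps y -` A \<inter> space M | y A. True})"

definition gen_events :: "'a measure \<Rightarrow> 'i set \<Rightarrow> ('i \<Rightarrow> 'a \<Rightarrow> 'b) \<Rightarrow> 'a set set" where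
  "gen_events M I X = sigma_sets (space M) {X i -` A \<inter> space M | i A. i \<in> I}"

definition coord_mono_on :: "int set \<Rightarrow> ((int \<Rightarrow> int) \<Rightarrow> real) \<Rightarrow> bool" where
  "coord_mono_on I f \<longleftrightarrow> (\<forall>x z. (\<forall>i\<in>I. x i \<le> z i) \<longrightarrow> f x \<le> f z)"

definition associated :: "'a measure \<Rightarrow> (int \<Rightarrow> 'a \<Rightarrow> int) \<Rightarrow> bool" where
  "associated M eps \<longleftrightarrow>
     (\<forall>I f g. finite I \<longrightarrow> coord_mono_on I f \<longrightarrow> coord_mono_on I g \<longrightarrow>
        (\<integral>\<omega>. f (\<lambda>i. eps i \<omega>) * g (\<lambda>i. eps i \<omega>) \<partial>M)
          \<ge> (\<integral>\<omega>. f (\<lambda>i. eps i \<omega>) \<partial>M) * (\<integral>\<omega>. g (\<lambda>i. eps i \<omega>) \<partial>M))"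

end

theory Submission
  imports Defs
begin


definition nb :: "nat \<Rightarrow> nat \<Rightarrow> real" where
  "nb a k = real ((k + a - 1) choose k) * 2^a / 3^(a+k)"

lemma hockey: "(\<Sum>l\<le>k. (l + a - 1) choose l) = (k + a) choose k"
proof (cases a)
  case 0
  have "(\<Sum>l\<le>k. (l + a - 1) choose l) = (\<Sum>l\<in>{0}. (l + a - 1) choose l)"
    by (rule sum.mono_neutral_right) (auto simp: 0 binomial_eq_0)
  then show ?thesis by (simp add: 0)
next
  case (Suc r)
  have "(\<Sum>l\<le>k. (l + a - 1) choose l) = (\<Sum>l\<le>k. (r + l) choose l)"
    by (simp add: Suc add.commute)
  also have "\<dots> = Suc (r + k) choose k" by (rule sum_choose_lower)
  finally show ?thesis by (simp add: Suc ac_simps)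
qed

lemma nb_step: "(\<Sum>l\<le>k. nb a l * (2/3*(1/3)^(k-l))) = nb (Suc a) k"
proof -
  have "\<And>l. l \<in> {..k} \<Longrightarrow> nb a l * (2/3*(1/3)^(k-l)) = real ((l + a - 1) choose l) * (2^(Suc a) / 3^(Suc a + k))"
  proof -
    fix l assume "l \<in> {..k}"
    then have e: "(3::real)^(Suc a + k) = 3^(a+l) * 3 * 3^(k-l)"
      by (simp flip: power_add power_Suc2 add: algebra_simps)
    show "nb a l * (2/3*(1/3)^(k-l)) = real ((l + a - 1) choose l) * (2^(Suc a) / 3^(Suc a + k))"
      unfolding nb_def e by (simp add: field_simps power_one_over)
  qed
  then have "(\<Sum>l\<le>k. nb a l * (2/3*(1/3)^(k-l))) = (\<Sum>l\<le>k. real ((l + a - 1) choose l) * (2^(Suc a) / 3^(Suc a + k)))"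
    by (rule sum.cong[OF refl])
  also have "\<dots> = (\<Sum>l\<le>k. real ((l + a - 1) choose l)) * (2^(Suc a) / 3^(Suc a + k))"
    by (simp only: sum_distrib_right)
  also have "(\<Sum>l\<le>k. real ((l + a - 1) choose l)) = real ((k + a) choose k)"
    by (simp only: of_nat_sum[symmetric] hockey)
  finally show ?thesis by (simp add: nb_def)
qed

context prob_space
begin

lemma indep_sums:
  fixes X :: "'i \<Rightarrow> 'a \<Rightarrow> nat"
  assumes ind: "indep_vars (\<lambda>_. count_space UNIV) X I" and J: "J1 \<inter> J2 = {}" "J1 \<subseteq> I" "J2 \<subseteq> I"
  shows "indep_var borel (\<lambda>\<omega>. real (\<Sum>p\<in>J1. X p \<omega>)) borel (\<lambda>\<omega>. real (\<Sum>p\<in>J2. X p \<omega>))"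
proof -
  have "indep_var (PiM J1 (\<lambda>_. count_space UNIV)) (\<lambda>\<omega>. restrict (\<lambda>i. X i \<omega>) J1) (PiM J2 (\<lambda>_. count_space UNIV)) (\<lambda>\<omega>. restrict (\<lambda>i. X i \<omega>) J2)"
    by (rule indep_var_restrict[OF ind]) (use J in auto)
  then have "indep_var borel ((\<lambda>f. real (\<Sum>p\<in>J1. f p)) \<circ> (\<lambda>\<omega>. restrict (\<lambda>i. X i \<omega>) J1)) borel ((\<lambda>f. real (\<Sum>p\<in>J2. f p)) \<circ> (\<lambda>\<omega>. restrict (\<lambda>i. X i \<omega>) J2))"
  proof (rule indep_var_compose)
    have "\<And>p. p \<in> J1 \<Longrightarrow> (\<lambda>f. real (f p)) \<in> borel_measurable (PiM J1 (\<lambda>_. count_space UNIV))"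
      by (rule measurable_compose[OF measurable_component_singleton]) auto
    then show "(\<lambda>f. real (\<Sum>p\<in>J1. f p)) \<in> borel_measurable (PiM J1 (\<lambda>_. count_space UNIV))"
      unfolding of_nat_sum by (rule borel_measurable_sum)
    have "\<And>p. p \<in> J2 \<Longrightarrow> (\<lambda>f. real (f p)) \<in> borel_measurable (PiM J2 (\<lambda>_. count_space UNIV))"
      by (rule measurable_compose[OF measurable_component_singleton]) auto
    then show "(\<lambda>f. real (\<Sum>p\<in>J2. f p)) \<in> borel_measurable (PiM J2 (\<lambda>_. count_space UNIV))"
      unfolding of_nat_sum by (rule borel_measurable_sum)
  qed
  moreover have "\<And>J. ((\<lambda>f. real (\<Sum>p\<in>J. f p)) \<circ> (\<lambda>\<omega>. restrict (\<lambda>i. X i \<omega>) J)) = (\<lambda>\<omega>. real (\<Sum>p\<in>J. (X p \<omega>::nat)))"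
    by (auto simp: fun_eq_iff intro!: sum.cong)
  ultimately show ?thesis by simp
qed

lemma sum_rv:
  fixes X :: "'i \<Rightarrow> 'a \<Rightarrow> nat"
  assumes ind: "indep_vars (\<lambda>_. count_space UNIV) X I" and J: "J \<subseteq> I"
  shows "(\<lambda>\<omega>. real (\<Sum>p\<in>J. X p \<omega>)) \<in> borel_measurable M"
  using indep_sums[OF ind, of J "{}"] J by (auto dest: indep_var_rv1)

lemma sum_event:
  fixes X :: "'i \<Rightarrow> 'a \<Rightarrow> nat"
  assumes ind: "indep_vars (\<lambda>_. count_space UNIV) X I" and J: "J \<subseteq> I"
  shows "{\<omega>\<in>space M. (\<Sum>p\<in>J. X p \<omega>) = k} \<in> events"
proof -
  have "(\<lambda>\<omega>. real (\<Sum>p\<in>J. X p \<omega>)) -` {real k} \<inter> space M \<in> events"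
    by (rule measurable_sets[OF sum_rv[OF ind J]]) simp
  moreover have "(\<lambda>\<omega>. real (\<Sum>p\<in>J. X p \<omega>)) -` {real k} \<inter> space M = {\<omega>\<in>space M. (\<Sum>p\<in>J. X p \<omega>) = k}"
    by (auto simp del: of_nat_sum)
  ultimately show ?thesis by simp
qed

lemma indep_point:
  fixes A B :: "'a \<Rightarrow> nat"
  assumes "indep_var borel (\<lambda>\<omega>. real (A \<omega>)) borel (\<lambda>\<omega>. real (B \<omega>))"
  shows "prob {\<omega>\<in>space M. A \<omega> = l \<and> B \<omega> = m} = prob {\<omega>\<in>space M. A \<omega> = l} * prob {\<omega>\<in>space M. B \<omega> = m}"
proof -
  have "prob ((\<lambda>x. (real (A x), real (B x))) -` ({real l} \<times> {real m}) \<inter> space M) =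
    prob ((\<lambda>x. real (A x)) -` {real l} \<inter> space M) * prob ((\<lambda>x. real (B x)) -` {real m} \<inter> space M)"
    by (rule indep_varD[OF assms]) auto
  moreover have "(\<lambda>x. (real (A x), real (B x))) -` ({real l} \<times> {real m}) \<inter> space M = {\<omega>\<in>space M. A \<omega> = l \<and> B \<omega> = m}"
    by auto
  moreover have "\<And>C::'a\<Rightarrow>nat. \<And>l. (\<lambda>x. real (C x)) -` {real l} \<inter> space M = {\<omega>\<in>space M. C \<omega> = l}"
    by auto
  ultimately show ?thesis by simp
qed

lemma sum_dist:
  fixes X :: "'i \<Rightarrow> 'a \<Rightarrow> nat"
  assumes ind: "indep_vars (\<lambda>_. count_space UNIV) X I"
    and D: "\<And>p k. p \<in> I \<Longrightarrow> prob {\<omega>\<in>space M. X p \<omega> = k} = 2/3*(1/3)^k"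
    and J: "finite J" "J \<subseteq> I"
  shows "prob {\<omega>\<in>space M. (\<Sum>p\<in>J. X p \<omega>) = k} = nb (card J) k"
  using J
proof (induction J arbitrary: k rule: finite_induct)
  case empty
  show ?case
  proof (cases "k = 0")
    case True then show ?thesis by (simp add: nb_def prob_space)
  next
    case False then show ?thesis by (simp add: nb_def binomial_eq_0)
  qed
next
  case (insert j J)
  let ?U = "\<lambda>\<omega>. \<Sum>p\<in>J. X p \<omega>"
  have jI: "j \<in> I" and JI: "J \<subseteq> I" using insert by auto
  have ind1: "indep_var borel (\<lambda>\<omega>. real (?U \<omega>)) borel (\<lambda>\<omega>. real (\<Sum>p\<in>{j}. X p \<omega>))"
    by (rule indep_sums[OF ind]) (use insert in auto)
  have "{\<omega>\<in>space M. (\<Sum>p\<in>insert j J. X p \<omega>) = k} = (\<Union>l\<in>{..k}. {\<omega>\<in>space M. ?U \<omega> = l \<and> X j \<omega> = k - l})"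
    using insert by auto
  then have "prob {\<omega>\<in>space M. (\<Sum>p\<in>insert j J. X p \<omega>) = k} = (\<Sum>l\<le>k. prob {\<omega>\<in>space M. ?U \<omega> = l \<and> X j \<omega> = k - l})"
  proof (simp only:, intro finite_measure_finite_Union)
    have "\<And>l. {\<omega>\<in>space M. ?U \<omega> = l \<and> X j \<omega> = k - l} = {\<omega>\<in>space M. ?U \<omega> = l} \<inter> {\<omega>\<in>space M. (\<Sum>p\<in>{j}. X p \<omega>) = k - l}"
      by auto
    then show "(\<lambda>l. {\<omega>\<in>space M. ?U \<omega> = l \<and> X j \<omega> = k - l}) ` {..k} \<subseteq> events"
      using sum_event[OF ind JI] sum_event[OF ind, of "{j}"] jI by auto
    show "disjoint_family_on (\<lambda>l. {\<omega>\<in>space M. ?U \<omega> = l \<and> X j \<omega> = k - l}) {..k}"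
      by (auto simp: disjoint_family_on_def)
  qed simp
  also have "\<dots> = (\<Sum>l\<le>k. nb (card J) l * (2/3*(1/3)^(k-l)))"
  proof (rule sum.cong[OF refl])
    fix l
    have "prob {\<omega>\<in>space M. ?U \<omega> = l \<and> X j \<omega> = k - l} = prob {\<omega>\<in>space M. ?U \<omega> = l \<and> (\<Sum>p\<in>{j}. X p \<omega>) = k - l}"
      by simp
    also have "\<dots> = prob {\<omega>\<in>space M. ?U \<omega> = l} * prob {\<omega>\<in>space M. (\<Sum>p\<in>{j}. X p \<omega>) = k - l}"
      by (rule indep_point[OF ind1])
    also have "\<dots> = nb (card J) l * (2/3*(1/3)^(k-l))"
      using insert.IH[OF JI] D[OF jI] by simp
    finally show "prob {\<omega>\<in>space M. ?U \<omega> = l \<and> X j \<omega> = k - l} = nb (card J) l * (2/3*(1/3)^(k-l))" .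
  qed
  also have "\<dots> = nb (card (insert j J)) k"
    using insert nb_step[where a="card J" and k=k] by simp
  finally show ?case .
qed

end


lemma r_anti:
  fixes a :: real
  assumes "a \<ge> 1" "j \<le> j'"
  shows "(real j' + a) / (3*(real j' + 1)) \<le> (real j + a) / (3*(real j + 1))"
proof -
  have "(real j' + a) * (3*(real j + 1)) \<le> (real j + a) * (3*(real j' + 1))"
  proof -
    have "0 \<le> (a - 1) * (real j' - real j)" using assms by simp
    then show ?thesis by (simp add: algebra_simps)
  qed
  then show ?thesis by (simp add: divide_simps)
qed

lemma window:
  fixes f :: "nat \<Rightarrow> real" and a :: nat
  assumes nonneg: "\<And>k. f k \<ge> 0" and tot: "\<And>W. finite W \<Longrightarrow> sum f W \<le> 1"
   and rec: "\<And>k. f (Suc k) = f k * ((real k + a) / (3*(real k + 1)))" and a: "a \<ge> 1"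
  shows "f k \<le> 16 / sqrt a"
proof (cases "a < 64")
  case True
  have "f k \<le> 1" using tot[of "{k}"] by simp
  moreover have "sqrt a < 8"
  proof -
    have "sqrt (real a) < sqrt 64" using True by (subst real_sqrt_less_iff) simp
    then show ?thesis by simp
  qed
  moreover have "sqrt a > 0" using a by simp
  ultimately have "f k * sqrt a \<le> 1 * 16" using nonneg[of k] by (intro mult_mono) auto
  then show ?thesis using \<open>sqrt a > 0\<close> by (simp add: field_simps)
next
  case False
  then have a64: "real a \<ge> 64" by simp
  define s where "s = sqrt (real a)"
  have s8: "s \<ge> 8" unfolding s_def using False by (intro real_le_rsqrt) simp
  have ss: "s * s = real a" unfolding s_def by simp
  define L where "L = nat \<lfloor>s / 4\<rfloor>"
  have L1: "real L \<le> s / 4" unfolding L_def using s8 by linarith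
  have L2: "real L > s / 4 - 1" unfolding L_def using s8 by linarith
  have L2': "real L \<ge> s / 8" using L2 s8 by linarith
  have Lge: "L \<ge> 1" using L2' s8 by (simp add: le_divide_eq)
  have LL: "16 * (real L * real L) \<le> real a"
  proof -
    have "real L * real L \<le> (s/4) * (s/4)" using L1 Lge by (intro mult_mono) auto
    then show ?thesis using ss by simp
  qed
  define r where "r j = (real j + a) / (3*(real j + 1))" for j
  have ranti: "j \<le> j' \<Longrightarrow> r j' \<le> r j" for j j' unfolding r_def using r_anti[of a j j'] a by simp
  have rpos: "r j \<ge> 0" for j unfolding r_def by simp
  have frec: "f (Suc j) = f j * r j" for j using rec unfolding r_def by simp
  have main: "f k \<le> 2 / real L"
  proof (cases "r (k + L) \<ge> 1 - 1/(2*real L)")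
    case True
    define q where "q = 1 - 1/(2*real L)"
    have q0: "q \<ge> 0" unfolding q_def using Lge by (simp add: field_simps)
    have ind: "i \<le> L \<Longrightarrow> f (k+i) \<ge> f k * q^i" for i
    proof (induction i)
      case 0 then show ?case by simp
    next
      case (Suc i)
      have "r (k+i) \<ge> q" using ranti[of "k+i" "k+L"] Suc.prems True unfolding q_def by simp
      then have "f (k+i) * r (k+i) \<ge> f k * q^i * q"
        using Suc nonneg q0 by (intro mult_mono) auto
      then show ?case using frec[of "k+i"] by (simp add: algebra_simps)
    qed
    have half: "i \<le> L \<Longrightarrow> q^i \<ge> 1/2" for i
    proof -
      assume i: "i \<le> L"
      have "1 + real i * (-1/(2*real L)) \<le> (1 + (-1/(2*real L)))^i"
        by (rule Bernoulli_inequality) (use Lge in \<open>simp add: field_simps\<close>)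
      moreover have "1 + real i * (-1/(2*real L)) \<ge> 1/2" using i Lge by (simp add: field_simps)
      ultimately show ?thesis unfolding q_def by simp
    qed
    have "real L * (f k / 2) = (\<Sum>i<L. f k / 2)" by simp
    also have "\<dots> \<le> (\<Sum>i<L. f (k+i))"
    proof (rule sum_mono)
      fix i assume "i \<in> {..<L}"
      then have "f k * (1/2) \<le> f k * q^i" using half[of i] nonneg[of k] by (intro mult_left_mono) auto
      also have "\<dots> \<le> f (k+i)" using ind[of i] \<open>i \<in> {..<L}\<close> by simp
      finally show "f k / 2 \<le> f (k+i)" by simp
    qed
    also have "\<dots> = sum f ((\<lambda>i. k+i) ` {..<L})" by (simp add: sum.reindex)
    also have "\<dots> \<le> 1" by (rule tot) simp
    finally show ?thesis using Lge by (simp add: field_simps)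
  next
    case False
    define x where "x = real k + real L + 1"
    have x0: "x > 0" unfolding x_def by simp
    have "r (k+L) = (x + a - 1) / (3*x)" unfolding r_def x_def by (simp add: algebra_simps)
    with False have "(x + a - 1) / (3*x) < 1 - 1/(2*real L)" by simp
    then have h1: "2 * real L * (x + a - 1) < 2 * real L * (3*x) - 3 * x"
      using x0 Lge by (simp add: field_simps)
    have h2: "real a - 1 < 2 * x"
    proof -
      have "2 * real L * (real a - 1) < 2 * real L * (2 * x)" using h1 x0 by (simp add: algebra_simps)
      then show ?thesis using Lge by simp
    qed
    have h3: "3 * x \<ge> 8 * (real L * real L)" using h2 LL a64 by linarith
    have h4: "real a - 1 < 2 * x - 4 * real L"
    proof -
      have "2 * real L * (real a - 1) < 2 * real L * (2 * x - 4 * real L)" using h1 h3 by (simp add: algebra_simps)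
      then show ?thesis using Lge by simp
    qed
    have "real L < real k + 1" using h4 a64 unfolding x_def by (smt (verit))
    then have kL: "k \<ge> L" by linarith
    have rle: "j \<ge> k - L \<Longrightarrow> r j \<le> 1" for j
    proof -
      assume j: "j \<ge> k - L"
      have "real j \<ge> real k - real L" using j kL by linarith
      then have "real a \<le> 2 * real j + 3" using h4 unfolding x_def by (smt (verit))
      then show "r j \<le> 1" unfolding r_def by (simp add: field_simps)
    qed
    have ind: "i \<le> L \<Longrightarrow> f (k - i) \<ge> f k" for i
    proof (induction i)
      case 0 then show ?case by simp
    next
      case (Suc i)
      have e: "Suc (k - Suc i) = k - i" using Suc.prems kL by simp
      have "f (k - i) = f (k - Suc i) * r (k - Suc i)" using frec[of "k - Suc i"] e by simp
      have "k - L \<le> k - Suc i" using Suc.prems by simp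
      then have "r (k - Suc i) \<le> 1" by (rule rle)
      also note \<open>f (k - i) = f (k - Suc i) * r (k - Suc i)\<close>
      also have "f (k - Suc i) * r (k - Suc i) \<le> f (k - Suc i)" using \<open>r (k - Suc i) \<le> 1\<close> nonneg[of "k - Suc i"]
        by (simp add: mult_left_le)
      finally show ?case using Suc by simp
    qed
    have "real L * f k = (\<Sum>i<L. f k)" by simp
    also have "\<dots> \<le> (\<Sum>i<L. f (k-i))" by (rule sum_mono) (use ind in auto)
    also have "\<dots> = sum f ((\<lambda>i. k-i) ` {..<L})"
      by (rule sum.reindex[symmetric, unfolded comp_def]) (use kL in \<open>auto simp: inj_on_def\<close>)
    also have "\<dots> \<le> 1" by (rule tot) simp
    finally have "real L * f k \<le> 1" .
    then show ?thesis using Lge nonneg[of k] by (simp add: field_simps)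
  qed
  also have "2 / real L \<le> 16 / s" using L2' s8 Lge by (simp add: field_simps)
  finally show ?thesis unfolding s_def .
qed


lemma nb_rec:
  assumes "a \<ge> 1"
  shows "nb a (Suc k) = nb a k * ((real k + a) / (3*(real k + 1)))"
proof -
  obtain b where b: "a = Suc b" using assms by (cases a) auto
  have "real (Suc (k+b)) * real ((k+b) choose k) = real (Suc (k+b) choose Suc k) * real (Suc k)"
    by (simp only: of_nat_mult[symmetric] Suc_times_binomial_eq)
  then have c: "real (Suc (k+b) choose Suc k) = real ((k+b) choose k) * (real k + a) / (real k + 1)"
    by (simp add: field_simps b)
  have e: "Suc k + a - 1 = Suc (k+b)" "k + a - 1 = k + b" using b by auto
  have "nb a (Suc k) = real (Suc (k+b) choose Suc k) * 2^a / 3^(a + Suc k)" unfolding nb_def e(1) ..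
  also have "\<dots> = real ((k+b) choose k) * (real k + a) / (real k + 1) * 2^a / (3^(a+k)*3)"
    by (simp only: c add_Suc_right power_Suc2)
  also have "\<dots> = nb a k * ((real k + a) / (3*(real k + 1)))"
    unfolding nb_def e(2) by (simp add: field_simps)
  finally show ?thesis .
qed

context prob_space
begin

lemma point_bound:
  fixes X :: "'i \<Rightarrow> 'a \<Rightarrow> nat"
  assumes ind: "indep_vars (\<lambda>_. count_space UNIV) X I"
    and D: "\<And>p k. p \<in> I \<Longrightarrow> prob {\<omega>\<in>space M. X p \<omega> = k} = 2/3*(1/3)^k"
    and J: "finite J" "J \<subseteq> I" "card J \<ge> 1"
  shows "prob {\<omega>\<in>space M. (\<Sum>p\<in>J. X p \<omega>) = k} \<le> 16 / sqrt (card J)"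
proof -
  have "nb (card J) k \<le> 16 / sqrt (card J)"
  proof (rule window)
    show "0 \<le> nb (card J) k" for k unfolding nb_def by simp
    show "nb (card J) (Suc k) = nb (card J) k * ((real k + card J) / (3*(real k + 1)))" for k
      using J by (simp add: nb_rec)
    show "1 \<le> card J" by fact
    fix W :: "nat set" assume W: "finite W"
    have "sum (nb (card J)) W = (\<Sum>k\<in>W. prob {\<omega>\<in>space M. (\<Sum>p\<in>J. X p \<omega>) = k})"
      using sum_dist[OF ind D J(1,2)] by simp
    also have "\<dots> = prob (\<Union>k\<in>W. {\<omega>\<in>space M. (\<Sum>p\<in>J. X p \<omega>) = k})"
      by (rule finite_measure_finite_Union[symmetric]) (use W sum_event[OF ind J(2)] in \<open>auto simp: disjoint_family_on_def\<close>)
    also have "\<dots> \<le> 1" by simp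
    finally show "sum (nb (card J)) W \<le> 1" .
  qed
  then show ?thesis using sum_dist[OF ind D J(1,2)] by simp
qed

lemma eq_bound:
  fixes X :: "'i \<Rightarrow> 'a \<Rightarrow> nat"
  assumes ind: "indep_vars (\<lambda>_. count_space UNIV) X I"
    and D: "\<And>p k. p \<in> I \<Longrightarrow> prob {\<omega>\<in>space M. X p \<omega> = k} = 2/3*(1/3)^k"
    and J: "finite J1" "J1 \<subseteq> I" "card J1 \<ge> 1" "finite J2" "J2 \<subseteq> I" "J1 \<inter> J2 = {}"
  shows "prob {\<omega>\<in>space M. (\<Sum>p\<in>J1. X p \<omega>) = (\<Sum>p\<in>J2. X p \<omega>)} \<le> 16 / sqrt (card J1)"
proof -
  let ?U = "\<lambda>\<omega>. \<Sum>p\<in>J1. X p \<omega>" and ?V = "\<lambda>\<omega>. \<Sum>p\<in>J2. X p \<omega>"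
  define A where "A k = {\<omega>\<in>space M. ?U \<omega> = k \<and> ?V \<omega> = k}" for k
  define B where "B k = {\<omega>\<in>space M. ?V \<omega> = k}" for k
  have iv: "indep_var borel (\<lambda>\<omega>. real (?U \<omega>)) borel (\<lambda>\<omega>. real (?V \<omega>))"
    by (rule indep_sums[OF ind]) (use J in auto)
  have Aev: "A k \<in> events" for k
  proof -
    have "A k = {\<omega>\<in>space M. ?U \<omega> = k} \<inter> B k" unfolding A_def B_def by auto
    then show ?thesis using sum_event[OF ind J(2)] sum_event[OF ind J(5)] unfolding B_def by auto
  qed
  have Bev: "B k \<in> events" for k unfolding B_def using sum_event[OF ind J(5)] by auto
  have s1: "(\<lambda>k. prob (A k)) sums prob (\<Union>k. A k)"
    by (rule finite_measure_UNION) (use Aev in \<open>auto simp: disjoint_family_on_def A_def\<close>)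
  have s2: "(\<lambda>k. prob (B k)) sums prob (\<Union>k. B k)"
    by (rule finite_measure_UNION) (use Bev in \<open>auto simp: disjoint_family_on_def B_def\<close>)
  then have s3: "(\<lambda>k. 16 / sqrt (card J1) * prob (B k)) sums (16 / sqrt (card J1) * prob (\<Union>k. B k))"
    by (rule sums_mult)
  have le: "prob (A k) \<le> 16 / sqrt (card J1) * prob (B k)" for k
  proof -
    have pb: "prob {\<omega>\<in>space M. ?U \<omega> = k} \<le> 16 / sqrt (card J1)"
      by (rule point_bound[OF ind _ J(1,2,3)]) (rule D)
    have "prob (A k) = prob {\<omega>\<in>space M. ?U \<omega> = k} * prob (B k)"
      unfolding A_def B_def by (rule indep_point[OF iv])
    also have "\<dots> \<le> 16 / sqrt (card J1) * prob (B k)"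
      by (rule mult_right_mono[OF pb]) (rule measure_nonneg)
    finally show ?thesis .
  qed
  have "prob (\<Union>k. A k) \<le> 16 / sqrt (card J1) * prob (\<Union>k. B k)"
    by (rule sums_le[OF _ s1 s3]) (use le in auto)
  also have "\<dots> \<le> 16 / sqrt (card J1) * 1" by (rule mult_left_mono) auto
  finally have "prob (\<Union>k. A k) \<le> 16 / sqrt (card J1)" by simp
  moreover have "(\<Union>k. A k) = {\<omega>\<in>space M. ?U \<omega> = ?V \<omega>}" unfolding A_def by auto
  ultimately show ?thesis by simp
qed

end


definition cnt :: "int list \<Rightarrow> int \<Rightarrow> nat" where
  "cnt p y = card {k. k < length p \<and> p!k = y}"

definition Phi :: "(nat \<Rightarrow> int \<Rightarrow> 'a \<Rightarrow> nat) \<Rightarrow> int list \<Rightarrow> (int \<Rightarrow> int) \<Rightarrow> 'a \<Rightarrow> int" where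
  "Phi xi p \<sigma> \<omega> = (\<Sum>y\<in>set p. \<sigma> y * (\<Sum>i=1..cnt p y. int (xi i y \<omega>)))"

lemma sum_cnt: "(\<Sum>y\<in>set p. cnt p y) = length p"
proof -
  have "{..<length p} = (\<Union>y\<in>set p. {k. k < length p \<and> p!k = y})" by auto
  then have "card {..<length p} = card (\<Union>y\<in>set p. {k. k < length p \<and> p!k = y})" by simp
  also have "\<dots> = (\<Sum>y\<in>set p. card {k. k < length p \<and> p!k = y})"
    by (rule card_UN_disjoint) auto
  finally show ?thesis unfolding cnt_def by simp
qed

lemma sqrt_aux:
  assumes "1 \<le> b" "real m \<le> 2 * real b" "m \<ge> 1"
  shows "16 / sqrt (real b) \<le> 16 * sqrt 2 / sqrt (real m)"
proof -
  have "sqrt (real m) \<le> sqrt (2 * real b)" using assms by simp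
  then have "sqrt (real m) \<le> sqrt 2 * sqrt (real b)" by (simp add: real_sqrt_mult)
  then show ?thesis using assms by (simp add: field_simps)
qed

context prob_space
begin

lemma list_bound:
  fixes xi :: "nat \<Rightarrow> int \<Rightarrow> 'a \<Rightarrow> nat"
  assumes ind: "indep_vars (\<lambda>_. count_space UNIV) (\<lambda>q. xi (fst q) (snd q)) {q. fst q \<ge> 1}"
    and D: "\<And>i y k. i \<ge> 1 \<Longrightarrow> prob {\<omega>\<in>space M. xi i y \<omega> = k} = 2/3*(1/3)^k"
    and sg: "\<And>y. y \<in> set p \<Longrightarrow> \<sigma> y = 1 \<or> \<sigma> y = -1" and p: "p \<noteq> []"
  shows "prob {\<omega>\<in>space M. Phi xi p \<sigma> \<omega> = 0} \<le> 16 * sqrt 2 / sqrt (length p)"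
proof -
  define X where "X q \<omega> = xi (fst q) (snd q) \<omega>" for q \<omega>
  define I where "I = {q::nat\<times>int. fst q \<ge> 1}"
  have ind': "indep_vars (\<lambda>_. count_space UNIV) X I" using ind unfolding X_def I_def by simp
  have D': "\<And>q k. q \<in> I \<Longrightarrow> prob {\<omega>\<in>space M. X q \<omega> = k} = 2/3*(1/3)^k"
    unfolding X_def I_def using D by auto
  define S where "S = Sigma (set p) (\<lambda>y. {1..cnt p y})"
  define J where "J = prod.swap ` S"
  have finS: "finite S" unfolding S_def by simp
  have finJ: "finite J" unfolding J_def using finS by simp
  have JI: "J \<subseteq> I" unfolding J_def S_def I_def by auto
  have cardJ: "card J = length p"
  proof -
    have "card J = card S" unfolding J_def by (rule card_image) simp
    also have "\<dots> = (\<Sum>y\<in>set p. card {1..cnt p y})" unfolding S_def by (rule card_SigmaI) auto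
    also have "\<dots> = length p" using sum_cnt[of p] by simp
    finally show ?thesis .
  qed
  have PhiJ: "Phi xi p \<sigma> \<omega> = (\<Sum>q\<in>J. \<sigma> (snd q) * int (X q \<omega>))" for \<omega>
  proof -
    have "Phi xi p \<sigma> \<omega> = (\<Sum>y\<in>set p. \<Sum>i\<in>{1..cnt p y}. \<sigma> y * int (xi i y \<omega>))"
      unfolding Phi_def by (simp add: sum_distrib_left)
    also have "\<dots> = (\<Sum>(y,i)\<in>S. \<sigma> y * int (xi i y \<omega>))"
      unfolding S_def by (rule sum.Sigma) auto
    also have "\<dots> = (\<Sum>q\<in>J. \<sigma> (snd q) * int (X q \<omega>))"
      unfolding J_def X_def by (subst sum.reindex) (auto simp: case_prod_beta)
    finally show ?thesis .
  qed
  define Jp where "Jp = {q\<in>J. \<sigma> (snd q) = 1}"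
  define Jm where "Jm = {q\<in>J. \<sigma> (snd q) \<noteq> 1}"
  have Jun: "J = Jp \<union> Jm" "Jp \<inter> Jm = {}" unfolding Jp_def Jm_def by auto
  have sgJ: "q \<in> Jm \<Longrightarrow> \<sigma> (snd q) = -1" for q
    using sg unfolding Jm_def J_def S_def by force
  have finp: "finite Jp" "finite Jm" using finJ Jun by auto
  have Jpi: "Jp \<subseteq> I" "Jm \<subseteq> I" using JI Jun by auto
  have cards: "card Jp + card Jm = length p"
    using card_Un_disjoint[OF finp Jun(2)] Jun(1) cardJ by simp
  have PhiE: "Phi xi p \<sigma> \<omega> = int (\<Sum>q\<in>Jp. X q \<omega>) - int (\<Sum>q\<in>Jm. X q \<omega>)" for \<omega>
  proof -
    have "Phi xi p \<sigma> \<omega> = (\<Sum>q\<in>Jp. \<sigma> (snd q) * int (X q \<omega>)) + (\<Sum>q\<in>Jm. \<sigma> (snd q) * int (X q \<omega>))"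
      unfolding PhiJ Jun(1) by (rule sum.union_disjoint[OF finp Jun(2)])
    also have "(\<Sum>q\<in>Jp. \<sigma> (snd q) * int (X q \<omega>)) = (\<Sum>q\<in>Jp. int (X q \<omega>))"
      by (rule sum.cong) (auto simp: Jp_def)
    also have "(\<Sum>q\<in>Jm. \<sigma> (snd q) * int (X q \<omega>)) = (\<Sum>q\<in>Jm. - int (X q \<omega>))"
      by (rule sum.cong) (auto simp: sgJ)
    finally show ?thesis by (simp add: sum_negf)
  qed
  have lp: "length p \<ge> 1" using p by (cases p) auto
  show ?thesis
  proof (cases "card Jm \<le> card Jp")
    case True
    have "{\<omega>\<in>space M. Phi xi p \<sigma> \<omega> = 0} = {\<omega>\<in>space M. (\<Sum>q\<in>Jp. X q \<omega>) = (\<Sum>q\<in>Jm. X q \<omega>)}"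
      unfolding PhiE by (auto simp del: of_nat_sum)
    moreover have "prob {\<omega>\<in>space M. (\<Sum>q\<in>Jp. X q \<omega>) = (\<Sum>q\<in>Jm. X q \<omega>)} \<le> 16 / sqrt (card Jp)"
      by (rule eq_bound[OF ind' D']) (use finp Jpi Jun cards lp True in auto)
    moreover have "16 / sqrt (card Jp) \<le> 16 * sqrt 2 / sqrt (length p)"
      by (rule sqrt_aux) (use cards lp True in auto)
    ultimately show ?thesis by simp
  next
    case False
    have "{\<omega>\<in>space M. Phi xi p \<sigma> \<omega> = 0} = {\<omega>\<in>space M. (\<Sum>q\<in>Jm. X q \<omega>) = (\<Sum>q\<in>Jp. X q \<omega>)}"
      unfolding PhiE by (auto simp del: of_nat_sum)
    moreover have "prob {\<omega>\<in>space M. (\<Sum>q\<in>Jm. X q \<omega>) = (\<Sum>q\<in>Jp. X q \<omega>)} \<le> 16 / sqrt (card Jm)"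
      by (rule eq_bound[OF ind' D']) (use finp Jpi Jun cards lp False in auto)
    moreover have "16 / sqrt (card Jm) \<le> 16 * sqrt 2 / sqrt (length p)"
      by (rule sqrt_aux) (use cards lp False in auto)
    ultimately show ?thesis by simp
  qed
qed

end


definition sgn_of :: "int list \<Rightarrow> int list \<Rightarrow> int \<Rightarrow> int" where
  "sgn_of p s y = s ! (SOME k. k < length p \<and> p!k = y)"

lemma sgn_of_map:
  assumes "y \<in> set (map (\<lambda>k. Y k \<omega>) [0..<m])"
  shows "sgn_of (map (\<lambda>k. Y k \<omega>) [0..<m]) (map (\<lambda>k. eps (Y k \<omega>) \<omega>) [0..<m]) y = eps y \<omega>"
proof -
  let ?p = "map (\<lambda>k. Y k \<omega>) [0..<m]" and ?s = "map (\<lambda>k. eps (Y k \<omega>) \<omega>) [0..<m]"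
  have ex: "\<exists>k. k < length ?p \<and> ?p!k = y" using assms by (auto simp: in_set_conv_nth)
  define k where "k = (SOME k. k < length ?p \<and> ?p!k = y)"
  have "k < length ?p \<and> ?p!k = y" unfolding k_def by (rule someI_ex[OF ex])
  then show ?thesis unfolding sgn_of_def k_def[symmetric] by auto
qed

lemma rwrs_rep:
  assumes m: "m \<ge> 1"
  shows "rwrs_X eps Y xi m \<omega> = Phi xi (map (\<lambda>k. Y k \<omega>) [0..<m])
            (sgn_of (map (\<lambda>k. Y k \<omega>) [0..<m]) (map (\<lambda>k. eps (Y k \<omega>) \<omega>) [0..<m])) \<omega>"
proof -
  let ?p = "map (\<lambda>k. Y k \<omega>) [0..<m]" and ?s = "map (\<lambda>k. eps (Y k \<omega>) \<omega>) [0..<m]"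
  have setp: "set ?p = (\<lambda>k. Y k \<omega>) ` {..m-1}" using m by auto
  have sg: "sgn_of ?p ?s y = eps y \<omega>" if "y \<in> set ?p" for y
  proof -
    have ex: "\<exists>k. k < length ?p \<and> ?p!k = y" using that by (auto simp: in_set_conv_nth)
    define k where "k = (SOME k. k < length ?p \<and> ?p!k = y)"
    have "k < length ?p \<and> ?p!k = y" unfolding k_def by (rule someI_ex[OF ex])
    then show ?thesis unfolding sgn_of_def k_def[symmetric] by auto
  qed
  have ct: "cnt ?p y = local_time Y (m - 1) y \<omega>" for y
  proof -
    have "{k. k < length ?p \<and> ?p!k = y} = {k. k \<le> m - 1 \<and> Y k \<omega> = y}" using m by auto
    then show ?thesis unfolding cnt_def local_time_def by simp
  qed
  show ?thesis
    unfolding rwrs_X_def Phi_def using m setp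
    by (auto simp: sg ct intro!: sum.cong)
qed

context prob_space
begin

lemma decomp_bound:
  fixes eps :: "int \<Rightarrow> 'a \<Rightarrow> int" and Y :: "nat \<Rightarrow> 'a \<Rightarrow> int" and xi :: "nat \<Rightarrow> int \<Rightarrow> 'a \<Rightarrow> nat"
  assumes eps_pm: "\<And>y \<omega>. \<omega> \<in> space M \<Longrightarrow> eps y \<omega> \<in> {-1, 1}"
    and xi_indep: "indep_vars (\<lambda>_. count_space UNIV) (\<lambda>p. xi (fst p) (snd p)) {p. fst p \<ge> 1}"
    and xi_dist: "\<And>i y k. i \<ge> 1 \<Longrightarrow> prob {\<omega>\<in>space M. xi i y \<omega> = k} = 2/3 * (1/3) ^ k"
    and xi_indep_env: "indep_set (gen_events M {p. fst p \<ge> 1} (\<lambda>p. xi (fst p) (snd p)))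
                     (sigma_sets (space M) (gen_events M UNIV eps \<union> gen_events M UNIV Y))"
    and m: "m \<ge> 1"
  shows "{\<omega>\<in>space M. rwrs_X eps Y xi m \<omega> = 0} \<in> events"
    and "A \<in> sigma_sets (space M) (gen_events M UNIV eps \<union> gen_events M UNIV Y) \<Longrightarrow>
         prob (A \<inter> {\<omega>\<in>space M. rwrs_X eps Y xi m \<omega> = 0}) \<le> 16 * sqrt 2 / sqrt m * prob A"
proof -
  define GS where "GS = sigma_sets (space M) (gen_events M UNIV eps \<union> gen_events M UNIV Y)"
  define XS where "XS = gen_events M {p. fst p \<ge> 1} (\<lambda>p. xi (fst p) (snd p))"
  have GSev: "GS \<subseteq> events" unfolding GS_def using indep_setD_ev2[OF xi_indep_env] .
  have XSev: "XS \<subseteq> events" unfolding XS_def using indep_setD_ev1[OF xi_indep_env] .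
  have GE: "gen_events M UNIV eps \<subseteq> Pow (space M)" "gen_events M UNIV Y \<subseteq> Pow (space M)"
    unfolding gen_events_def by (auto dest: sigma_sets_into_sp[rotated])
  interpret GSa: sigma_algebra "space M" GS unfolding GS_def
    by (rule sigma_algebra_sigma_sets) (use GE in auto)
  define key where "key \<omega> = (map (\<lambda>k. Y k \<omega>) [0..<m], map (\<lambda>k. eps (Y k \<omega>) \<omega>) [0..<m])" for \<omega>
  define E where "E j = {\<omega>\<in>space M. key \<omega> = j}" for j
  define Zj where "Zj j = {\<omega>\<in>space M. Phi xi (fst j) (sgn_of (fst j) (snd j)) \<omega> = 0}" for j
  define Z where "Z = {\<omega>\<in>space M. rwrs_X eps Y xi m \<omega> = 0}"
  have EGS: "E j \<in> GS" for j
  proof (cases j)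
    case (Pair p s)
    show ?thesis
    proof (cases "length p = m \<and> length s = m")
      case False
      then have "E j = {}" unfolding E_def key_def Pair by auto
      then show ?thesis by simp
    next
      case True
      have Ej: "E j = space M \<inter> (\<Inter>k\<in>{..<m}. (Y k -` {p!k} \<inter> space M) \<inter> (eps (p!k) -` {s!k} \<inter> space M))"
        using True m unfolding E_def key_def Pair by (auto simp: list_eq_iff_nth_eq)
      moreover have "(Y k -` {p!k} \<inter> space M) \<in> GS" for k
        unfolding GS_def gen_events_def by (rule sigma_sets.Basic, rule UnI2, rule sigma_sets.Basic) blast
      moreover have "(eps (p!k) -` {s!k} \<inter> space M) \<in> GS" for k
        unfolding GS_def gen_events_def by (rule sigma_sets.Basic, rule UnI1, rule sigma_sets.Basic) blast
      ultimately have "(\<Inter>k\<in>{..<m}. (Y k -` {p!k} \<inter> space M) \<inter> (eps (p!k) -` {s!k} \<inter> space M)) \<in> GS"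
        using m by (intro GSa.finite_INT) (auto simp: lessThan_empty_iff)
      then show ?thesis unfolding Ej by (intro GSa.Int GSa.top)
    qed
  qed
  define N where "N = sigma (space M) {(\<lambda>p. xi (fst p) (snd p)) i -` B \<inter> space M | i B. i \<in> {p. fst p \<ge> 1}}"
  have sN: "sets N = XS" unfolding N_def XS_def gen_events_def by (rule sets_measure_of) auto
  have spN: "space N = space M" unfolding N_def by (rule space_measure_of) auto
  have xiN: "(\<lambda>\<omega>. real (xi i y \<omega>)) \<in> borel_measurable N" if "i \<ge> 1" for i y
  proof -
    have "xi i y \<in> N \<rightarrow>\<^sub>M count_space UNIV"
    proof (subst measurable_count_space_eq2_countable, safe)
      fix a :: nat
      have "xi i y -` {a} \<inter> space M \<in> sigma_sets (space M) {(\<lambda>p. xi (fst p) (snd p)) i -` B \<inter> space M | i B. i \<in> {p. fst p \<ge> 1}}"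
        by (rule sigma_sets.Basic) (use that in force)
      then show "xi i y -` {a} \<inter> space N \<in> sets N" using sN spN unfolding XS_def gen_events_def by simp
    qed auto
    then show ?thesis by (rule measurable_compose) simp
  qed
  have ZjXS: "Zj j \<in> XS" for j
  proof -
    obtain p s where j: "j = (p, s)" by (cases j)
    have "(\<lambda>\<omega>. real_of_int (Phi xi p (sgn_of p s) \<omega>)) \<in> borel_measurable N"
      unfolding Phi_def of_int_sum of_int_mult of_int_of_nat_eq
      by (intro borel_measurable_sum borel_measurable_times borel_measurable_const xiN) auto
    then have "(\<lambda>\<omega>. real_of_int (Phi xi p (sgn_of p s) \<omega>)) -` {0} \<inter> space N \<in> sets N"
      by (rule measurable_sets) simp
    moreover have "(\<lambda>\<omega>. real_of_int (Phi xi p (sgn_of p s) \<omega>)) -` {0} \<inter> space N = Zj j"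
      unfolding Zj_def j spN by auto
    ultimately show ?thesis using sN by simp
  qed
  have ZjE: "Zj j \<in> events" for j using ZjXS[of j] XSev by blast
  have EE: "E j \<in> events" for j using EGS[of j] GSev by blast
  have Zdec: "Z = (\<Union>j. E j \<inter> Zj j)"
    unfolding Z_def E_def Zj_def using rwrs_rep[OF m, of eps Y xi] by (auto simp: key_def)
  show Zev: "{\<omega>\<in>space M. rwrs_X eps Y xi m \<omega> = 0} \<in> events"
    unfolding Z_def[symmetric] Zdec using ZjE EE by (intro sets.countable_UN'') auto
  assume AGS: "A \<in> sigma_sets (space M) (gen_events M UNIV eps \<union> gen_events M UNIV Y)"
  then have AG: "A \<in> GS" unfolding GS_def .
  have AM: "A \<in> events" using AG GSev by auto
  define c where "c = 16 * sqrt 2 / sqrt m"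
  have c0: "c \<ge> 0" unfolding c_def by simp
  have each: "emeasure M (A \<inter> E j \<inter> Zj j) \<le> ennreal c * emeasure M (A \<inter> E j)" for j
  proof (cases "E j = {}")
    case True then show ?thesis by simp
  next
    case False
    then obtain \<omega>0 where w0: "\<omega>0 \<in> space M" "key \<omega>0 = j" unfolding E_def by auto
    obtain p s where j: "j = (p, s)" by (cases j)
    have ps: "p = map (\<lambda>k. Y k \<omega>0) [0..<m]" "s = map (\<lambda>k. eps (Y k \<omega>0) \<omega>0) [0..<m]"
      using w0 j unfolding key_def by auto
    have pne: "p \<noteq> []" using ps m by auto
    have sgp: "sgn_of p s y = 1 \<or> sgn_of p s y = -1" if "y \<in> set p" for y
    proof -
      have "sgn_of p s y = eps y \<omega>0" using sgn_of_map[of y Y \<omega>0 m eps] that unfolding ps by simp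
      then show ?thesis using eps_pm[OF w0(1), of y] by auto
    qed
    have pZ: "prob (Zj j) \<le> c"
      unfolding Zj_def j c_def fst_conv snd_conv
      using list_bound[OF xi_indep xi_dist sgp pne] ps by simp
    have AEG: "A \<inter> E j \<in> GS" using AG EGS[of j] by (rule GSa.Int)
    have "prob (A \<inter> E j \<inter> Zj j) = prob (Zj j \<inter> (A \<inter> E j))" by (simp add: Int_ac)
    also have "\<dots> = prob (Zj j) * prob (A \<inter> E j)"
      by (rule indep_setD[OF xi_indep_env ZjXS[of j, unfolded XS_def] AEG[unfolded GS_def]])
    also have "\<dots> \<le> c * prob (A \<inter> E j)" by (rule mult_right_mono[OF pZ]) simp
    finally have le1: "prob (A \<inter> E j \<inter> Zj j) \<le> c * prob (A \<inter> E j)" .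
    have "emeasure M (A \<inter> E j \<inter> Zj j) = ennreal (prob (A \<inter> E j \<inter> Zj j))" by (rule emeasure_eq_measure)
    also have "\<dots> \<le> ennreal (c * prob (A \<inter> E j))" using le1 by (rule ennreal_leI)
    also have "\<dots> = ennreal c * ennreal (prob (A \<inter> E j))" by (rule ennreal_mult) (use c0 in auto)
    also have "ennreal (prob (A \<inter> E j)) = emeasure M (A \<inter> E j)" by (rule emeasure_eq_measure[symmetric])
    finally show ?thesis .
  qed
  have "emeasure M (A \<inter> Z) = emeasure M (\<Union>j\<in>UNIV. A \<inter> E j \<inter> Zj j)"
    unfolding Zdec by (rule arg_cong[where f="emeasure M"]) blast
  also have "\<dots> = (\<integral>\<^sup>+j. emeasure M (A \<inter> E j \<inter> Zj j) \<partial>count_space UNIV)"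
  proof (rule emeasure_UN_countable)
    show "A \<inter> E j \<inter> Zj j \<in> events" if "j \<in> UNIV" for j using AM EE[of j] ZjE[of j] by blast
    show "disjoint_family_on (\<lambda>j. A \<inter> E j \<inter> Zj j) UNIV" unfolding disjoint_family_on_def E_def by blast
  qed simp
  also have "\<dots> \<le> (\<integral>\<^sup>+j. ennreal c * emeasure M (A \<inter> E j) \<partial>count_space UNIV)"
    by (rule nn_integral_mono) (rule each)
  also have "\<dots> = ennreal c * (\<integral>\<^sup>+j. emeasure M (A \<inter> E j) \<partial>count_space UNIV)"
    by (rule nn_integral_cmult) simp
  also have "(\<integral>\<^sup>+j. emeasure M (A \<inter> E j) \<partial>count_space UNIV) = emeasure M (\<Union>j\<in>UNIV. A \<inter> E j)"
  proof (rule emeasure_UN_countable[symmetric])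
    show "A \<inter> E j \<in> events" if "j \<in> UNIV" for j using AM EE[of j] by blast
    show "disjoint_family_on (\<lambda>j. A \<inter> E j) UNIV" unfolding disjoint_family_on_def E_def by blast
  qed simp
  also have "(\<Union>j\<in>UNIV. A \<inter> E j) = A" using sets.sets_into_space[OF AM] unfolding E_def by auto
  finally have "emeasure M (A \<inter> Z) \<le> ennreal c * emeasure M A" .
  moreover have "emeasure M (A \<inter> Z) = ennreal (prob (A \<inter> Z))" by (rule emeasure_eq_measure)
  moreover have "ennreal c * emeasure M A = ennreal (c * prob A)"
    unfolding emeasure_eq_measure by (rule ennreal_mult[symmetric]) (use c0 in auto)
  ultimately have "ennreal (prob (A \<inter> Z)) \<le> ennreal (c * prob A)" by simp
  moreover have "0 \<le> c * prob A" using c0 by simp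
  ultimately have "prob (A \<inter> Z) \<le> c * prob A" by (simp add: ennreal_le_iff)
  then show "prob (A \<inter> {\<omega>\<in>space M. rwrs_X eps Y xi m \<omega> = 0}) \<le> 16 * sqrt 2 / sqrt m * prob A"
    unfolding Z_def c_def .
qed

end



lemma cond_exp_le_const:
  fixes f :: "'a \<Rightarrow> real"
  assumes P: "prob_space M" and sub: "subalgebra M F" and f: "integrable M f"
    and H: "\<And>A. A \<in> sets F \<Longrightarrow> (\<integral>x. indicator A x * f x \<partial>M) \<le> c * measure M A"
  shows "AE x in M. real_cond_exp M F f x \<le> c"
proof -
  interpret prob_space M by fact
  interpret finite_measure_subalgebra M F by unfold_locales (rule sub)
  define g where "g = real_cond_exp M F f"
  define D where "D = {x\<in>space M. c < g x}"
  have gF[measurable]: "g \<in> borel_measurable F" unfolding g_def by simp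
  have sM: "space F = space M" using sub by (simp add: subalgebra_def)
  have "{x\<in>space F. c < g x} \<in> sets F" by measurable
  then have DF: "D \<in> sets F" unfolding D_def sM .
  have DM[measurable]: "D \<in> sets M" using DF sub by (auto simp: subalgebra_def)
  have fM[measurable]: "f \<in> borel_measurable M" using f by simp
  have gi: "integrable M g" unfolding g_def using f by (rule real_cond_exp_int(1))
  have i1: "integrable M (\<lambda>x. indicator D x * f x)"
    using integrable_mult_indicator[OF DM f] by simp
  have indF: "(indicator D :: 'a \<Rightarrow> real) \<in> borel_measurable F" using DF by simp
  have e1: "(\<integral>x. indicator D x * g x \<partial>M) = (\<integral>x. indicator D x * f x \<partial>M)"
    unfolding g_def by (rule real_cond_exp_intg(2)[OF i1 indF fM])
  have i2: "integrable M (\<lambda>x. indicator D x * g x)"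
    using integrable_mult_indicator[OF DM gi] by simp
  define h where "h x = indicator D x * (g x - c)" for x
  have hi: "integrable M h" unfolding h_def
    using i2 integrable_mult_indicator[OF DM integrable_const[of c]]
    by (simp add: right_diff_distrib)
  have "(\<integral>x. h x \<partial>M) = (\<integral>x. indicator D x * g x \<partial>M) - (\<integral>x. indicator D x * c \<partial>M)"
    unfolding h_def right_diff_distrib
    by (rule Bochner_Integration.integral_diff[OF i2]) (use integrable_mult_indicator[OF DM integrable_const[of c]] in simp)
  also have "(\<integral>x. indicator D x * c \<partial>M) = measure M D * c" using DM by simp
  finally have "(\<integral>x. h x \<partial>M) \<le> 0" using e1 H[OF DF] by (simp add: algebra_simps)
  moreover have hnn: "\<And>x. h x \<ge> 0" unfolding h_def D_def by (simp add: indicator_def)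
  ultimately have "(\<integral>x. h x \<partial>M) = 0" using integral_nonneg_AE[of h M] by (simp add: antisym)
  then have "AE x in M. h x = 0" using integral_nonneg_eq_0_iff_AE[OF hi] hnn by simp
  then show ?thesis
  proof (rule AE_mp[OF _ AE_I2], intro impI)
    fix x assume "x \<in> space M" "h x = 0"
    then show "real_cond_exp M F f x \<le> c" unfolding h_def D_def g_def
      by (auto simp: indicator_def split: if_splits)
  qed
qed

theorem lemma5:
  fixes M :: "'a measure"
    and eps :: "int \<Rightarrow> 'a \<Rightarrow> int"
    and Y :: "nat \<Rightarrow> 'a \<Rightarrow> int"
    and xi :: "nat \<Rightarrow> int \<Rightarrow> 'a \<Rightarrow> nat"
    and \<delta>1 \<delta>2 \<delta>3 :: real
  assumes P: "prob_space M"
    (* environment eps *)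
    and eps_rv: "\<And>y. eps y \<in> M \<rightarrow>\<^sub>M count_space UNIV"
    and eps_pm: "\<And>y \<omega>. \<omega> \<in> space M \<Longrightarrow> eps y \<omega> \<in> {-1, 1}"
    and eps_half: "measure M {\<omega>\<in>space M. eps 0 \<omega> = 1} = 1/2"
    and eps_stat: "\<And>s. distr M (PiM UNIV (\<lambda>_. count_space UNIV)) (\<lambda>\<omega>. \<lambda>y. eps (y + s) \<omega>)
                       = distr M (PiM UNIV (\<lambda>_. count_space UNIV)) (\<lambda>\<omega>. \<lambda>y. eps y \<omega>)"
    and eps_assoc: "associated M eps"
    and eps_corr: "\<exists>\<alpha>>1. \<exists>K. \<forall>y. y \<noteq> 0 \<longrightarrow>
                     \<bar>\<integral>\<omega>. real_of_int (eps 0 \<omega> * eps y \<omega>) \<partial>M\<bar> \<le> K * real_of_int \<bar>y\<bar> powr (-\<alpha>)"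
    (* simple symmetric random walk Y *)
    and Y_rv: "\<And>k. Y k \<in> M \<rightarrow>\<^sub>M count_space UNIV"
    and Y0: "\<And>\<omega>. \<omega> \<in> space M \<Longrightarrow> Y 0 \<omega> = 0"
    and Y_steps_indep: "prob_space.indep_vars M (\<lambda>_. count_space UNIV)
                          (\<lambda>k \<omega>. Y (Suc k) \<omega> - Y k \<omega>) UNIV"
    and Y_steps_dist: "\<And>k. measure M {\<omega>\<in>space M. Y (Suc k) \<omega> - Y k \<omega> = 1} = 1/2 \<and>
                            measure M {\<omega>\<in>space M. Y (Suc k) \<omega> - Y k \<omega> = -1} = 1/2"
    (* Y independent of eps *)
    and Y_eps_indep: "prob_space.indep_set M (gen_events M UNIV eps) (gen_events M UNIV Y)"
    and xi_indep: "prob_space.indep_vars M (\<lambda>_. count_space UNIV)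
                     (\<lambda>p. xi (fst p) (snd p)) {p. fst p \<ge> 1}"
    and xi_dist: "\<And>i y k. i \<ge> 1 \<Longrightarrow>
                     measure M {\<omega>\<in>space M. xi i y \<omega> = k} = 2/3 * (1/3) ^ k"
    and xi_indep_env: "prob_space.indep_set M
                     (gen_events M {p. fst p \<ge> 1} (\<lambda>p. xi (fst p) (snd p)))
                     (sigma_sets (space M) (gen_events M UNIV eps \<union> gen_events M UNIV Y))"
    and d1: "\<delta>1 > 0" and d2: "\<delta>2 > 0" and d3: "\<delta>3 > 0"
  shows "\<exists>C. \<forall>n\<ge>2. AE \<omega> in M.
           \<omega> \<in> event_A Y \<delta>1 \<delta>2 n - event_B eps Y \<delta>1 \<delta>2 \<delta>3 n \<longrightarrow>
           real_cond_exp M (gen_FG M eps Y)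
              (indicator {\<omega>\<in>space M. rwrs_X eps Y xi (2*n) \<omega> = 0}) \<omega>
             \<le> C * sqrt (ln (real n) / real n)"
  proof -
  interpret prob_space M by (rule P)
  let ?F = "gen_FG M eps Y"
  define G where "G = {Y k -` A \<inter> space M | k A. True} \<union> {eps y -` A \<inter> space M | y A. True}"
  have GP: "G \<subseteq> Pow (space M)" unfolding G_def by auto
  have sF: "sets ?F = sigma_sets (space M) G" unfolding gen_FG_def G_def[symmetric] by (rule sets_measure_of[OF GP])
  have spF: "space ?F = space M" unfolding gen_FG_def G_def[symmetric] by (rule space_measure_of[OF GP])
  let ?GS = "sigma_sets (space M) (gen_events M UNIV eps \<union> gen_events M UNIV Y)"
  have FGS: "sets ?F \<subseteq> ?GS"
    unfolding sF
  proof (rule sigma_sets_mono, rule subsetI)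
    fix x assume "x \<in> G"
    then have "x \<in> gen_events M UNIV eps \<union> gen_events M UNIV Y"
      unfolding G_def gen_events_def by (auto intro: sigma_sets.Basic)
    then show "x \<in> ?GS" by (rule sigma_sets.Basic)
  qed
  have GSev: "?GS \<subseteq> events" using indep_setD_ev2[OF xi_indep_env] .
  have sub: "subalgebra M ?F" unfolding subalgebra_def using spF FGS GSev by auto
  have key: "AE \<omega> in M. real_cond_exp M ?F (indicator {\<omega>\<in>space M. rwrs_X eps Y xi (2*n) \<omega> = 0}) \<omega>
               \<le> 16 * sqrt 2 / sqrt (real (2*n))" if n: "n \<ge> 1" for n
  proof (rule cond_exp_le_const[OF P sub])
    let ?Z = "{\<omega>\<in>space M. rwrs_X eps Y xi (2*n) \<omega> = 0}"
    have m: "2*n \<ge> 1" using n by simp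
    have Zev: "?Z \<in> events" by (rule decomp_bound(1)[OF eps_pm xi_indep xi_dist xi_indep_env m])
    show "integrable M (indicator ?Z :: 'a \<Rightarrow> real)" using Zev
      by (intro integrable_real_indicator) (auto simp: emeasure_eq_measure)
    fix A assume "A \<in> sets ?F"
    then have AG: "A \<in> ?GS" using FGS by auto
    have "(\<integral>x. indicator A x * indicator ?Z x \<partial>M) = (\<integral>x. indicator (A \<inter> ?Z) x \<partial>M :: real)"
      by (intro Bochner_Integration.integral_cong refl) (rule indicator_inter_arith[symmetric])
    also have "\<dots> = prob (A \<inter> ?Z)" by (simp add: Int_absorb2 Int_assoc)
    also have "\<dots> \<le> 16 * sqrt 2 / sqrt (real (2*n)) * prob A"
      by (rule decomp_bound(2)[OF eps_pm xi_indep xi_dist xi_indep_env m AG])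
    finally show "(\<integral>x. indicator A x * indicator ?Z x \<partial>M) \<le> 16 * sqrt 2 / sqrt (real (2*n)) * prob A" .
  qed
  show ?thesis
  proof (intro exI allI impI)
    fix n :: nat assume n: "n \<ge> 2"
    have b: "16 * sqrt 2 / sqrt (real (2*n)) \<le> 16 / sqrt (ln 2) * sqrt (ln (real n) / real n)"
    proof -
      have ln2: "ln (2::real) > 0" by simp
      have "16 * sqrt 2 / sqrt (real (2*n)) = 16 / sqrt (real n)" by (simp add: real_sqrt_mult)
      also have "\<dots> = 16 / sqrt (ln 2) * (sqrt (ln 2) / sqrt (real n))" using ln2 by simp
      also have "\<dots> \<le> 16 / sqrt (ln 2) * (sqrt (ln (real n)) / sqrt (real n))"
      proof (rule mult_left_mono[OF divide_right_mono])
        show "sqrt (ln 2) \<le> sqrt (ln (real n))" using n by simp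
      qed auto
      also have "\<dots> = 16 / sqrt (ln 2) * sqrt (ln (real n) / real n)" by (simp add: real_sqrt_divide)
      finally show ?thesis .
    qed
    show "AE \<omega> in M.
           \<omega> \<in> event_A Y \<delta>1 \<delta>2 n - event_B eps Y \<delta>1 \<delta>2 \<delta>3 n \<longrightarrow>
           real_cond_exp M (gen_FG M eps Y)
              (indicator {\<omega>\<in>space M. rwrs_X eps Y xi (2*n) \<omega> = 0}) \<omega>
             \<le> 16 / sqrt (ln 2) * sqrt (ln (real n) / real n)"
    proof -
      have "1 \<le> n" using n by simp
      then have k: "AE \<omega> in M. real_cond_exp M (gen_FG M eps Y)
              (indicator {\<omega>\<in>space M. rwrs_X eps Y xi (2*n) \<omega> = 0}) \<omega> \<le> 16 * sqrt 2 / sqrt (real (2*n))"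
        by (rule key)
      show ?thesis using k by (rule eventually_mono) (use b in auto)
    qed
  qed
qed

end
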